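(* Fix integers $c\ge2$, $k\ge2$. Let $P$ be the RAM program that, on a dataset $x$ with $n=|x|$ (read from $\texttt{input\_len}$), performs independent biased coin flips where flip number $i+1$ ($i=0,1,2,\dots$) succeeds with probability $\frac{1}{(\max\{n-i,0\}+k)^c}$ (computed by forming $b=\max\{n-i,0\}+k$, computing $b^c$ by $c-1$ multiplications, and drawing randomness), stops at the first success, and outputs the number $i$ of unsuccessful flips preceding it; each loop iteration executes a fixed number of instructions independent of $x$ and $n$, so the runtime is a deterministic (affine) function of the output. Then $P$ is $\varepsilon$-JOT-DP in the unbounded setting, where $\varepsilon=2c\ln\!\big(\frac{k+1}{k-1}\big)$.
   Context: Datasets are finite sequences of records; two datasets are adjacent if their insert-delete distance (minimum number of single-record insertions/deletions transforming one into the other) is at most $1$. A program runs on $x$ in an execution environment $\mathit{env}$ (initial machine state) compatible with $x$, with random output $\mathrm{out}(P(x,\mathit{env}))$ and random runtime $T_P(x,\mathit{env})$ (number of RAM instructions executed). $P$ is $\varepsilon$-JOT-DP in the unbounded setting if for all adjacent datasets $x,x'$ of arbitrary lengths, all compatible $\mathit{env},\mathit{env}'$ and all sets $S$ of (output, runtime) pairs, $\Pr[(\mathrm{out}(P(x,\mathit{env})),T_P(x,\mathit{env}))\in S]\le e^{\varepsilon}\Pr[(\mathrm{out}(P(x',\mathit{env}')),T_P(x',\mathit{env}'))\in S]$. Thus the output has pmf $f_n(i)=p_n(i)\prod_{j=0}^{i-1}(1-p_n(j))$ with $p_n(j)=1/(\max\{n-j,0\}+k)^c$. *)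

theory Defs
  imports "HOL-Analysis.Analysis"
begin

definition ins_del_adjacent :: "'a list \<Rightarrow> 'a list \<Rightarrow> bool" where
  "ins_del_adjacent x x' \<longleftrightarrow>
     x = x'
   \<or> (\<exists>ys zs a. x' = ys @ a # zs \<and> x = ys @ zs)
   \<or> (\<exists>ys zs a. x = ys @ a # zs \<and> x' = ys @ zs)"

definition flip_prob :: "nat \<Rightarrow> nat \<Rightarrow> nat \<Rightarrow> nat \<Rightarrow> real" where
  "flip_prob c k n j = 1 / (real (nat (max (int n - int j) 0) + k)) ^ c"

definition out_pmf :: "nat \<Rightarrow> nat \<Rightarrow> nat \<Rightarrow> nat \<Rightarrow> real" where
  "out_pmf c k n i = flip_prob c k n i * (\<Prod>j<i. 1 - flip_prob c k n j)"

text \<open>The runtime is the deterministic affine function t0 + t1 * i of the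
output i (t0, t1 are the fixed instruction counts of the program, independent
of the data and of the environment).\<close>
definition joint_prob :: "nat \<Rightarrow> nat \<Rightarrow> nat \<Rightarrow> nat \<Rightarrow> 'a list \<Rightarrow> (nat \<times> nat) set \<Rightarrow> real" where
  "joint_prob c k t0 t1 x S =
     (\<Sum>\<^sub>\<infinity> i \<in> {i. (i, t0 + t1 * i) \<in> S}. out_pmf c k (length x) i)"

end

theory Submission
  imports Defs
begin

definition mm :: "nat \<Rightarrow> nat \<Rightarrow> nat \<Rightarrow> real" where
  "mm k n j = real (nat (max (int n - int j) 0) + k)"

lemma fp_mm: "flip_prob c k n j = 1 / (mm k n j) ^ c"
  by (simp add: flip_prob_def mm_def)

lemma mm_ge: "real k \<le> mm k n j"
  by (simp add: mm_def)

lemma mm_le: "j \<le> n \<Longrightarrow> mm k (Suc n) j = mm k n j + 1"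
  by (simp add: mm_def)

lemma mm_gt: "n < j \<Longrightarrow> mm k (Suc n) j = real k \<and> mm k n j = real k"
  by (simp add: mm_def)

lemma mm_Suc_Suc: "mm k (Suc n) (Suc j) = mm k n j"
  by (simp add: mm_def)

lemma mm_mono: "mm k n j \<le> mm k (Suc n) j"
  by (simp add: mm_def)

lemma mm_le1: "mm k (Suc n) j \<le> mm k n j + 1"
  by (simp add: mm_def)

lemma fp_bounds:
  assumes "k \<ge> 2"
  shows "0 \<le> flip_prob c k n j" "flip_prob c k n j \<le> 1"
proof -
  have "mm k n j \<ge> 1" using mm_ge[of k n j] assms by linarith
  hence "(mm k n j) ^ c \<ge> 1" by (simp add: one_le_power)
  thus "0 \<le> flip_prob c k n j" "flip_prob c k n j \<le> 1" by (auto simp: fp_mm)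
qed

lemma partial_sum:
  assumes "k \<ge> 2"
  shows "(\<Sum>i<m. out_pmf c k n i) = 1 - (\<Prod>j<m. 1 - flip_prob c k n j)"
  by (induction m) (auto simp: out_pmf_def algebra_simps)

lemma out_nonneg:
  assumes "k \<ge> 2"
  shows "0 \<le> out_pmf c k n i"
  unfolding out_pmf_def using fp_bounds[OF assms]
  by (intro mult_nonneg_nonneg prod_nonneg) auto

lemma out_summable:
  assumes "k \<ge> 2"
  shows "out_pmf c k n summable_on A"
proof -
  have "out_pmf c k n summable_on UNIV"
  proof (rule nonneg_bdd_above_summable_on)
    show "\<And>x. x \<in> UNIV \<Longrightarrow> 0 \<le> out_pmf c k n x" using out_nonneg[OF assms] by auto
    show "bdd_above (sum (out_pmf c k n) ` {F. F \<subseteq> UNIV \<and> finite F})"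
    proof (rule bdd_aboveI)
      fix s assume "s \<in> sum (out_pmf c k n) ` {F. F \<subseteq> UNIV \<and> finite F}"
      then obtain F where F: "finite F" "s = sum (out_pmf c k n) F" by auto
      obtain m where "F \<subseteq> {..<m}"
        using F(1) by (meson finite_nat_iff_bounded subset_eq lessThan_iff)
      hence "s \<le> (\<Sum>i<m. out_pmf c k n i)"
        using F sum_mono2[of "{..<m}" F "out_pmf c k n"] out_nonneg[OF assms] by auto
      also have "\<dots> = 1 - (\<Prod>j<m. 1 - flip_prob c k n j)" by (rule partial_sum[OF assms])
      also have "\<dots> \<le> 1" using fp_bounds[OF assms]
        by (simp add: prod_nonneg)
      finally show "s \<le> 1" .
    qed
  qed
  thus ?thesis by (rule summable_on_subset_banach) auto
qed

lemma key_ineq: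
  fixes a :: real
  assumes "a \<ge> 2" "c \<ge> 2"
  shows "(1 - 1 / (a + 1) ^ c) * ((a - 1) / a) \<le> (a / (a + 1)) * (1 - 1 / a ^ c)"
proof -
  have apos: "a > 0" using assms by simp
  have "1 / (a + 1) ^ c \<ge> 0" using apos by simp
  hence "(1 - 1 / (a + 1) ^ c) * ((a - 1) / a) \<le> (a - 1) / a"
  proof -
    have "0 \<le> (a - 1) / a" using assms by simp
    moreover have "1 - 1 / (a + 1) ^ c \<le> 1" using \<open>1 / (a + 1) ^ c \<ge> 0\<close> by simp
    ultimately show ?thesis by (metis mult_le_cancel_right1 mult.commute mult_left_le)
  qed
  also have "(a - 1) / a = (a / (a + 1)) * (1 - 1 / a ^ 2)"
  proof -
    have "1 - 1 / a ^ 2 = (a - 1) * (a + 1) / (a * a)"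
      using apos by (simp add: field_simps power2_eq_square)
    moreover have "(a / (a + 1)) * ((a - 1) * (a + 1) / (a * a)) = (a - 1) / a"
      using apos by (simp add: divide_simps)
    ultimately show ?thesis by simp
  qed
  also have "\<dots> \<le> (a / (a + 1)) * (1 - 1 / a ^ c)"
  proof -
    have "a ^ 2 \<le> a ^ c" using assms by (intro power_increasing) auto
    hence "1 / a ^ c \<le> 1 / a ^ 2" using apos by (intro divide_left_mono) auto
    thus ?thesis using apos by (intro mult_left_mono) auto
  qed
  finally show ?thesis .
qed

definition QQ :: "nat \<Rightarrow> nat \<Rightarrow> nat \<Rightarrow> nat \<Rightarrow> real" where
  "QQ c k n i = (\<Prod>j<i. 1 - flip_prob c k n j)"

lemma QQ_nonneg: "k \<ge> 2 \<Longrightarrow> 0 \<le> QQ c k n i"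
  unfolding QQ_def using fp_bounds by (intro prod_nonneg) auto

lemma invariant:
  assumes "k \<ge> 2" "c \<ge> 2"
  shows "QQ c k (Suc n) i * ((mm k (Suc n) i - 1) / mm k (Suc n) i) \<le> QQ c k n i"
proof (induction i)
  case 0
  have "mm k (Suc n) 0 \<ge> 2" using mm_ge[of k "Suc n" 0] assms by linarith
  then show ?case by (simp add: QQ_def)
next
  case (Suc i)
  define A where "A = mm k n i"
  define B where "B = mm k (Suc n) i"
  have A2: "A \<ge> 2" using mm_ge[of k n i] assms unfolding A_def by linarith
  have B'': "mm k (Suc n) (Suc i) = A" by (simp add: A_def mm_Suc_Suc)
  have step: "(1 - 1 / B ^ c) * ((A - 1) / A) \<le> ((B - 1) / B) * (1 - 1 / A ^ c)"
  proof (cases "i \<le> n")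
    case True
    hence "B = A + 1" by (simp add: A_def B_def mm_le)
    thus ?thesis using key_ineq[OF A2 assms(2)] by simp
  next
    case False
    hence "B = A" using mm_gt[of n i k] by (simp add: A_def B_def)
    thus ?thesis by (simp add: mult.commute)
  qed
  have f1: "1 - flip_prob c k (Suc n) i = 1 - 1 / B ^ c" by (simp add: fp_mm B_def)
  have f2: "1 - flip_prob c k n i = 1 - 1 / A ^ c" by (simp add: fp_mm A_def)
  have nn1: "0 \<le> 1 - 1 / B ^ c" using fp_bounds(2)[OF assms(1), of c "Suc n" i] f1 by linarith
  have nn2: "0 \<le> 1 - 1 / A ^ c" using fp_bounds(2)[OF assms(1), of c n i] f2 by linarith
  have q0: "0 \<le> QQ c k (Suc n) i" by (rule QQ_nonneg[OF assms(1)])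
  have "QQ c k (Suc n) (Suc i) * ((mm k (Suc n) (Suc i) - 1) / mm k (Suc n) (Suc i))
      = QQ c k (Suc n) i * ((1 - 1 / B ^ c) * ((A - 1) / A))"
    by (simp add: QQ_def f1 B'')
  also have "\<dots> \<le> QQ c k (Suc n) i * (((B - 1) / B) * (1 - 1 / A ^ c))"
    using step q0 by (rule mult_left_mono)
  also have "\<dots> = (QQ c k (Suc n) i * ((B - 1) / B)) * (1 - 1 / A ^ c)" by simp
  also have "\<dots> \<le> QQ c k n i * (1 - 1 / A ^ c)"
    using mult_right_mono[OF Suc.IH nn2] by (simp only: B_def)
  also have "\<dots> = QQ c k n (Suc i)" by (simp add: QQ_def f2)
  finally show ?case .
qed

lemma out_QQ: "out_pmf c k n i = flip_prob c k n i * QQ c k n i"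
  by (simp add: out_pmf_def QQ_def)

lemma dir2:
  assumes "k \<ge> 2" "c \<ge> 2"
  shows "out_pmf c k (Suc n) i \<le> (real k / (real k - 1)) * out_pmf c k n i"
proof -
  define B where "B = mm k (Suc n) i"
  have Bk: "B \<ge> real k" using mm_ge unfolding B_def by auto
  have k2: "real k \<ge> 2" using assms by simp
  have T: "(real k - 1) / real k \<le> (B - 1) / B"
  proof -
    have "(real k - 1) / real k = 1 - 1 / real k" using k2 by (simp add: field_simps)
    also have "\<dots> \<le> 1 - 1 / B" using Bk k2 by (simp add: frac_le)
    also have "\<dots> = (B - 1) / B" using Bk k2 by (simp add: field_simps)
    finally show ?thesis .
  qed
  have q0: "0 \<le> QQ c k (Suc n) i" by (rule QQ_nonneg[OF assms(1)])
  have "QQ c k (Suc n) i * ((real k - 1) / real k) \<le> QQ c k (Suc n) i * ((B - 1) / B)"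
    using T q0 by (rule mult_left_mono)
  also have "\<dots> \<le> QQ c k n i" using invariant[OF assms, of n i] by (simp add: B_def)
  finally have "QQ c k (Suc n) i * ((real k - 1) / real k) \<le> QQ c k n i" .
  hence Qb: "QQ c k (Suc n) i \<le> (real k / (real k - 1)) * QQ c k n i"
    using k2 by (simp add: field_simps)
  have pb: "flip_prob c k (Suc n) i \<le> flip_prob c k n i"
  proof -
    have "mm k n i \<ge> 2" using mm_ge[of k n i] k2 by linarith
    hence "mm k n i ^ c \<le> mm k (Suc n) i ^ c" "0 < mm k n i ^ c"
      using mm_mono[of k n i] by (auto intro: power_mono)
    thus ?thesis by (simp add: fp_mm frac_le)
  qed
  have "out_pmf c k (Suc n) i = flip_prob c k (Suc n) i * QQ c k (Suc n) i" by (rule out_QQ)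
  also have "\<dots> \<le> flip_prob c k n i * ((real k / (real k - 1)) * QQ c k n i)"
    using pb Qb fp_bounds[OF assms(1)] q0 by (intro mult_mono) auto
  also have "\<dots> = (real k / (real k - 1)) * out_pmf c k n i" by (simp add: out_QQ)
  finally show ?thesis .
qed

lemma recip_aux:
  fixes x y C :: real
  assumes "0 < x" "0 < y" "y \<le> C * x"
  shows "1 / x \<le> C * (1 / y)"
  using assms by (simp add: field_simps)

lemma dir1:
  assumes "k \<ge> 2" "c \<ge> 2"
  shows "out_pmf c k n i \<le> ((real k + 1) / real k) ^ c * out_pmf c k (Suc n) i"
proof -
  define A where "A = mm k n i"
  define B where "B = mm k (Suc n) i"
  have k2: "real k \<ge> 2" using assms by simp
  have Ak: "A \<ge> real k" using mm_ge unfolding A_def by auto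
  have BA: "B \<le> A + 1" "A \<le> B" using mm_le1 mm_mono unfolding A_def B_def by auto
  have Qb: "QQ c k n i \<le> QQ c k (Suc n) i"
    unfolding QQ_def
  proof (rule prod_mono, safe)
    fix j
    show "0 \<le> 1 - flip_prob c k n j" using fp_bounds[OF assms(1)] by simp
    have "mm k n j \<ge> 2" using mm_ge[of k n j] k2 by linarith
    hence "mm k n j ^ c \<le> mm k (Suc n) j ^ c" "0 < mm k n j ^ c"
      using mm_mono[of k n j] by (auto intro: power_mono)
    hence "flip_prob c k (Suc n) j \<le> flip_prob c k n j" by (simp add: fp_mm frac_le)
    thus "1 - flip_prob c k n j \<le> 1 - flip_prob c k (Suc n) j" by simp
  qed
  have pb: "flip_prob c k n i \<le> ((real k + 1) / real k) ^ c * flip_prob c k (Suc n) i"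
  proof -
    have "B \<le> (real k + 1) / real k * A"
    proof -
      have "A + 1 \<le> (real k + 1) / real k * A"
        using Ak k2 by (simp add: field_simps)
      thus ?thesis using BA by linarith
    qed
    hence "B ^ c \<le> ((real k + 1) / real k * A) ^ c"
      using BA Ak k2 by (intro power_mono) auto
    hence h: "B ^ c \<le> ((real k + 1) / real k) ^ c * A ^ c" by (simp only: power_mult_distrib)
    have Bp: "B ^ c > 0" "A ^ c > 0" using BA Ak k2 by auto
    have "1 / A ^ c \<le> ((real k + 1) / real k) ^ c * (1 / B ^ c)"
      using recip_aux[OF Bp(2) Bp(1) h] .
    thus ?thesis by (simp add: fp_mm A_def B_def)
  qed
  have "out_pmf c k n i = flip_prob c k n i * QQ c k n i" by (rule out_QQ)
  also have "\<dots> \<le> (((real k + 1) / real k) ^ c * flip_prob c k (Suc n) i) * QQ c k (Suc n) i"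
    using pb Qb fp_bounds[OF assms(1)] QQ_nonneg[OF assms(1)] by (intro mult_mono) auto
  also have "\<dots> = ((real k + 1) / real k) ^ c * out_pmf c k (Suc n) i" by (simp add: out_QQ)
  finally show ?thesis .
qed

lemma E_eq:
  assumes "k \<ge> 2"
  shows "exp (2 * real c * ln ((real k + 1) / (real k - 1))) = ((real k + 1) / (real k - 1)) ^ (2 * c)"
proof -
  have r: "(real k + 1) / (real k - 1) > 0" using assms by simp
  have "exp (2 * real c * ln ((real k + 1) / (real k - 1))) = exp (real (2 * c) * ln ((real k + 1) / (real k - 1)))"
    by simp
  also have "\<dots> = ((real k + 1) / (real k - 1)) ^ (2 * c)"
    by (simp only: exp_of_nat_mult exp_ln[OF r])
  finally show ?thesis .
qed

lemma pointwise:
  assumes "k \<ge> 2" "c \<ge> 2" "n' = Suc n \<or> n = Suc n' \<or> n = n'"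
  shows "out_pmf c k n i \<le> ((real k + 1) / (real k - 1)) ^ (2 * c) * out_pmf c k n' i"
proof -
  define r where "r = (real k + 1) / (real k - 1)"
  have k2: "real k \<ge> 2" using assms by simp
  have r1: "1 \<le> r" using k2 by (simp add: r_def field_simps)
  have rc: "r \<le> r ^ c" using r1 assms(2) by (metis One_nat_def le_trans one_le_numeral power_increasing power_one_right)
  have rc2: "r ^ c \<le> r ^ (2 * c)" using r1 by (intro power_increasing) auto
  have b1: "real k / (real k - 1) \<le> r ^ (2 * c)"
  proof -
    have "real k / (real k - 1) \<le> r" using k2 by (simp add: r_def frac_le)
    thus ?thesis using rc rc2 by linarith
  qed
  have b2: "((real k + 1) / real k) ^ c \<le> r ^ (2 * c)"
  proof -
    have "(real k + 1) / real k \<le> r" using k2 unfolding r_def by (intro frac_le) auto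
    hence "((real k + 1) / real k) ^ c \<le> r ^ c" using k2 by (intro power_mono) auto
    thus ?thesis using rc2 by linarith
  qed
  have o0: "\<And>m. 0 \<le> out_pmf c k m i" using out_nonneg[OF assms(1)] by auto
  consider "n' = Suc n" | "n = Suc n'" | "n = n'" using assms(3) by blast
  then show ?thesis
  proof cases
    case 1
    have "out_pmf c k n i \<le> ((real k + 1) / real k) ^ c * out_pmf c k n' i"
      using dir1[OF assms(1,2), of n i] 1 by simp
    also have "\<dots> \<le> r ^ (2 * c) * out_pmf c k n' i" using b2 o0 by (rule mult_right_mono)
    finally show ?thesis by (simp add: r_def)
  next
    case 2
    have "out_pmf c k n i \<le> (real k / (real k - 1)) * out_pmf c k n' i"
      using dir2[OF assms(1,2), of n' i] 2 by simp
    also have "\<dots> \<le> r ^ (2 * c) * out_pmf c k n' i" using b1 o0 by (rule mult_right_mono)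
    finally show ?thesis by (simp add: r_def)
  next
    case 3
    have "out_pmf c k n i \<le> 1 * out_pmf c k n' i" using 3 by simp
    also have "\<dots> \<le> r ^ (2 * c) * out_pmf c k n' i"
      using r1 o0 by (intro mult_right_mono) (auto simp: one_le_power)
    finally show ?thesis by (simp add: r_def)
  qed
qed

lemma adj_len:
  assumes "ins_del_adjacent x x'"
  shows "length x' = Suc (length x) \<or> length x = Suc (length x') \<or> length x = length x'"
  using assms unfolding ins_del_adjacent_def by auto

theorem mainTheorem8:
  fixes c k t0 t1 :: nat
  assumes "c \<ge> 2" and "k \<ge> 2"
  shows "\<forall>(x :: 'a list) x' S. ins_del_adjacent x x' \<longrightarrow>
           joint_prob c k t0 t1 x S
             \<le> exp (2 * real c * ln ((real k + 1) / (real k - 1))) * joint_prob c k t0 t1 x' S"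
proof (intro allI impI)
  fix x x' :: "'a list" and S
  assume adj: "ins_del_adjacent x x'"
  define A where "A = {i. (i, t0 + t1 * i) \<in> S}"
  define E where "E = ((real k + 1) / (real k - 1)) ^ (2 * c)"
  have "joint_prob c k t0 t1 x S = infsum (out_pmf c k (length x)) A"
    by (simp add: joint_prob_def A_def)
  also have "\<dots> \<le> infsum (\<lambda>i. E * out_pmf c k (length x') i) A"
  proof (rule infsum_mono)
    show "out_pmf c k (length x) summable_on A" by (rule out_summable[OF assms(2)])
    show "(\<lambda>i. E * out_pmf c k (length x') i) summable_on A"
      by (rule summable_on_cmult_right) (rule out_summable[OF assms(2)])
    show "\<And>i. i \<in> A \<Longrightarrow> out_pmf c k (length x) i \<le> E * out_pmf c k (length x') i"
      unfolding E_def using pointwise[OF assms(2,1) adj_len[OF adj]] by blast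
  qed
  also have "\<dots> = E * infsum (out_pmf c k (length x')) A"
    by (rule infsum_cmult_right) (rule out_summable[OF assms(2)])
  also have "\<dots> = exp (2 * real c * ln ((real k + 1) / (real k - 1))) * joint_prob c k t0 t1 x' S"
    by (simp add: joint_prob_def A_def E_def E_eq[OF assms(2)])
  finally show "joint_prob c k t0 t1 x S
             \<le> exp (2 * real c * ln ((real k + 1) / (real k - 1))) * joint_prob c k t0 t1 x' S" .
qed

end
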